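(* If $n\ge3$, then $a_n(y;-1,1)=0$ and $a_n(y;1,-1)=2^{n-2}y^{n-1}(y-1)$.
   Context: An inversion sequence of length $n$ is a sequence $\rho=\rho_1\cdots\rho_n$ of integers with $1\le \rho_i\le i$ for all $i$; $I_{n,i}$ is the set of those of length $n$ with last letter $i$. Let $\mathrm{area}(\rho)=\rho_1+\cdots+\rho_n$ and $\mathrm{sper}(\rho)=n+\rho_1+\sum_{i=1}^{n-1}\max(\rho_{i+1}-\rho_i,0)$ (the area and semi-perimeter of the bargraph whose $i$-th column has $\rho_i$ cells). Define $a_n(y;p,q)=\sum_{i=1}^n y^i\sum_{\rho\in I_{n,i}}p^{\mathrm{area}(\rho)}q^{\mathrm{sper}(\rho)}$. *)

theory Defs
  imports Main
begin

(* Inversion sequences of length n, as lists rho with rho!(i-1) = rho_i (1-based letters). *)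
definition inv_seqs :: "nat \<Rightarrow> nat list set" where
  "inv_seqs n = {rho. length rho = n \<and> (\<forall>i<n. 1 \<le> rho ! i \<and> rho ! i \<le> i + 1)}"

definition inv_seqs_last :: "nat \<Rightarrow> nat \<Rightarrow> nat list set" where
  "inv_seqs_last n i = {rho \<in> inv_seqs n. rho ! (n - 1) = i}"

definition area :: "nat list \<Rightarrow> nat" where
  "area rho = sum_list rho"

(* sper(rho) = n + rho_1 + sum_{i=1}^{n-1} max(rho_{i+1} - rho_i, 0); nat subtraction truncates,
   which is exactly max(.,0). *)
definition sper :: "nat list \<Rightarrow> nat" where
  "sper rho = length rho + rho ! 0 + (\<Sum>i<length rho - 1. rho ! (i + 1) - rho ! i)"

definition a_gf :: "nat \<Rightarrow> 'a::comm_ring_1 \<Rightarrow> 'a \<Rightarrow> 'a \<Rightarrow> 'a" where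
  "a_gf n y p q = (\<Sum>i=1..n. y ^ i * (\<Sum>rho\<in>inv_seqs_last n i. p ^ area rho * q ^ sper rho))"

end

theory Submission
  imports Defs
begin

lemma inv_seqs_Suc:
  "inv_seqs (Suc n) = (\<lambda>(xs,b). xs@[b]) ` (inv_seqs n \<times> {1..Suc n})"
proof
  show "inv_seqs (Suc n) \<subseteq> (\<lambda>(xs,b). xs@[b]) ` (inv_seqs n \<times> {1..Suc n})"
  proof
    fix rho assume r: "rho \<in> inv_seqs (Suc n)"
    hence len: "length rho = Suc n" and c: "\<forall>i<Suc n. 1 \<le> rho ! i \<and> rho ! i \<le> i + 1"
      by (auto simp: inv_seqs_def)
    have ne: "rho \<noteq> []" using len by auto
    have e: "rho = butlast rho @ [last rho]" using ne by simp
    have "butlast rho \<in> inv_seqs n"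
      unfolding inv_seqs_def using len c by (auto simp: nth_butlast)
    moreover have "last rho \<in> {1..Suc n}"
      using c len ne by (auto simp: last_conv_nth)
    ultimately show "rho \<in> (\<lambda>(xs,b). xs@[b]) ` (inv_seqs n \<times> {1..Suc n})"
      using e by (metis (no_types, lifting) SigmaI case_prod_conv image_eqI)
  qed
next
  show "(\<lambda>(xs,b). xs@[b]) ` (inv_seqs n \<times> {1..Suc n}) \<subseteq> inv_seqs (Suc n)"
  proof clarify
    fix xs b assume xs: "xs \<in> inv_seqs n" and b: "b \<in> {1..Suc n}"
    show "xs @ [b] \<in> inv_seqs (Suc n)"
      using xs b unfolding inv_seqs_def
      by (auto simp: nth_append less_Suc_eq)
  qed
qed

lemma finite_inv_seqs: "finite (inv_seqs n)"
proof -
  have "inv_seqs n \<subseteq> {xs. set xs \<subseteq> {..n} \<and> length xs = n}"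
    unfolding inv_seqs_def by (force simp: in_set_conv_nth)
  moreover have "finite {xs. set xs \<subseteq> {..n} \<and> length xs = n}"
    by (rule finite_lists_length_eq) simp
  ultimately show ?thesis by (rule finite_subset)
qed

lemma sum_inv_Suc:
  "(\<Sum>rho\<in>inv_seqs (Suc n). f rho) = (\<Sum>xs\<in>inv_seqs n. \<Sum>b=1..Suc n. f (xs@[b]))"
proof -
  have inj: "inj_on (\<lambda>(xs,b). xs@[b]) (inv_seqs n \<times> {1..Suc n})"
    by (auto simp: inj_on_def)
  have "(\<Sum>rho\<in>inv_seqs (Suc n). f rho) = (\<Sum>p\<in>inv_seqs n \<times> {1..Suc n}. f ((\<lambda>(xs,b). xs@[b]) p))"
    unfolding inv_seqs_Suc by (rule sum.reindex[OF inj, unfolded comp_def])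
  also have "\<dots> = (\<Sum>xs\<in>inv_seqs n. \<Sum>b=1..Suc n. f (xs@[b]))"
    using sum.cartesian_product[of "\<lambda>xs b. f (xs@[b])" "{1..Suc n}" "inv_seqs n"]
    by (simp only: split_def)
  finally show ?thesis .
qed

lemma inv_seqs_1: "inv_seqs 1 = {[1]}"
proof -
  have "inv_seqs 1 = (\<lambda>(xs,b). xs@[b]) ` (inv_seqs 0 \<times> {1..Suc 0})"
    using inv_seqs_Suc[of 0] by simp
  moreover have "inv_seqs 0 = {[]}" by (auto simp: inv_seqs_def)
  ultimately show ?thesis by simp
qed

lemma last_in:
  assumes "xs \<in> inv_seqs k" "k \<ge> 1"
  shows "xs \<noteq> []" "last xs \<in> {1..k}"
proof -
  have len: "length xs = k" and c: "\<forall>i<k. 1 \<le> xs ! i \<and> xs ! i \<le> i + 1"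
    using assms by (auto simp: inv_seqs_def)
  show "xs \<noteq> []" using len assms by auto
  moreover have "1 \<le> xs ! (k - 1) \<and> xs ! (k - 1) \<le> k - 1 + 1" using c assms
    by (metis Suc_pred' diff_less less_one not_less_iff_gr_or_eq le_less_trans zero_less_one less_numeral_extra(1) le_numeral_extra(4) not_le)
  ultimately show "last xs \<in> {1..k}" using len assms
    by (auto simp: last_conv_nth)
qed

lemma sper_snoc:
  assumes "xs \<noteq> []"
  shows "sper (xs@[b]) = sper xs + 1 + (b - last xs)"
proof -
  obtain m where m: "length xs = Suc m" using assms by (cases xs) auto
  have "(\<Sum>i<length (xs@[b]) - 1. (xs@[b]) ! (i + 1) - (xs@[b]) ! i)
      = (\<Sum>i<Suc m. (xs@[b]) ! (i + 1) - (xs@[b]) ! i)" using m by simp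
  also have "\<dots> = (\<Sum>i<m. (xs@[b]) ! (i + 1) - (xs@[b]) ! i) + ((xs@[b]) ! (Suc m) - (xs@[b]) ! m)"
    by simp
  also have "(\<Sum>i<m. (xs@[b]) ! (i + 1) - (xs@[b]) ! i) = (\<Sum>i<m. xs ! (i + 1) - xs ! i)"
    using m by (intro sum.cong) (auto simp: nth_append)
  also have "(xs@[b]) ! (Suc m) - (xs@[b]) ! m = b - last xs"
    using m assms by (simp add: nth_append last_conv_nth)
  finally show ?thesis
    unfolding sper_def using m assms by (simp add: nth_append)
qed

lemma area_snoc: "area (xs@[b]) = area xs + b"
  by (simp add: area_def)

lemma last_sum:
  assumes "n \<ge> 1"
  shows "(\<Sum>rho\<in>inv_seqs_last n i. g rho) = (\<Sum>rho\<in>inv_seqs n. if last rho = i then g rho else 0)"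
proof -
  have "(\<Sum>rho\<in>inv_seqs_last n i. g rho) = (\<Sum>rho\<in>inv_seqs n. if rho ! (n - 1) = i then g rho else 0)"
    unfolding inv_seqs_last_def by (rule sum.inter_filter[OF finite_inv_seqs])
  also have "\<dots> = (\<Sum>rho\<in>inv_seqs n. if last rho = i then g rho else 0)"
  proof (rule sum.cong)
    fix rho assume "rho \<in> inv_seqs n"
    hence "length rho = n" by (simp add: inv_seqs_def)
    hence "last rho = rho ! (n - 1)" using assms by (subst last_conv_nth) auto
    thus "(if rho ! (n - 1) = i then g rho else 0) = (if last rho = i then g rho else 0)" by simp
  qed simp
  finally show ?thesis .
qed

lemma two_terms:
  fixes f :: "nat \<Rightarrow> 'a::comm_monoid_add"
  assumes "k \<ge> 2" "\<And>a. a \<in> {1..k} \<Longrightarrow> a \<noteq> k - 1 \<Longrightarrow> a \<noteq> k \<Longrightarrow> f a = 0"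
  shows "sum f {1..k} = f (k - 1) + f k"
proof -
  have "sum f {1..k} = sum f {k - 1, k}"
    by (rule sum.mono_neutral_right) (use assms in auto)
  also have "\<dots> = f (k - 1) + f k" using assms by simp
  finally show ?thesis .
qed

definition T :: "nat \<Rightarrow> 'a::comm_ring_1" where
  "T k = (\<Sum>xs\<in>inv_seqs k. (-1) ^ area xs)"

lemma T_Suc: "(T (Suc k) :: 'a::comm_ring_1) = T k * (\<Sum>b=1..Suc k. (-1) ^ b)"
  unfolding T_def sum_inv_Suc area_snoc power_add sum_distrib_right
  by (rule sum.cong[OF refl]) (simp only: sum_distrib_left)

lemma T_zero': "(T (j + 2) :: 'a::comm_ring_1) = 0"
proof (induction j)
  case 0
  show ?case using T_Suc[of 1] by (simp add: numeral_2_eq_2)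
next
  case (Suc j)
  then show ?case using T_Suc[of "j + 2"] by (metis add_Suc mult_zero_left)
qed

lemma T_zero: "k \<ge> 2 \<Longrightarrow> (T k :: 'a::comm_ring_1) = 0"
  using T_zero'[of "k - 2"] by (metis le_add_diff_inverse2)

lemma part1:
  fixes y :: "'a::comm_ring_1"
  assumes "n \<ge> 3"
  shows "a_gf n y (-1) 1 = 0"
proof -
  obtain m where m: "n = Suc m" "m \<ge> 2" using assms by (cases n) auto
  have "(\<Sum>rho\<in>inv_seqs_last n i. (-1) ^ area rho * (1::'a) ^ sper rho) = 0" for i
  proof -
    have "(\<Sum>rho\<in>inv_seqs_last n i. (-1) ^ area rho * (1::'a) ^ sper rho)
        = (\<Sum>rho\<in>inv_seqs n. if last rho = i then (-1) ^ area rho else 0)"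
      using assms by (simp add: last_sum)
    also have "\<dots> = (\<Sum>xs\<in>inv_seqs m. \<Sum>b=1..Suc m. if b = i then (-1) ^ area xs * (-1) ^ b else 0)"
      unfolding m sum_inv_Suc area_snoc power_add
      by (rule sum.cong[OF refl], rule sum.cong[OF refl]) simp
    also have "\<dots> = (\<Sum>xs\<in>inv_seqs m. if i \<in> {1..Suc m} then (-1) ^ area xs * (-1) ^ i else 0)"
      by (rule sum.cong[OF refl], rule sum.delta[OF finite_atLeastAtMost])
    also have "\<dots> = (if i \<in> {1..Suc m} then T m * (-1) ^ i else 0)"
      unfolding T_def by (cases "i \<in> {1..Suc m}") (simp_all only: if_True if_False sum_distrib_right sum.neutral_const)
    also have "\<dots> = 0" using T_zero[OF m(2), where 'a='a] by simp
    finally show ?thesis .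
  qed
  thus ?thesis unfolding a_gf_def by simp
qed


definition S :: "nat \<Rightarrow> nat \<Rightarrow> 'a::comm_ring_1" where
  "S k b = (\<Sum>xs\<in>inv_seqs k. if last xs = b then (-1) ^ sper xs else 0)"

lemma S_rec:
  assumes k: "k \<ge> 1"
  shows "(S (Suc k) b :: 'a::comm_ring_1) =
    (if b \<in> {1..Suc k} then - (\<Sum>a=1..k. S k a * (-1) ^ (b - a)) else 0)"
proof -
  have "(S (Suc k) b :: 'a) = (\<Sum>xs\<in>inv_seqs k. \<Sum>c=1..Suc k. if c = b then (-1) ^ sper (xs@[c]) else 0)"
    unfolding S_def sum_inv_Suc by simp
  also have "\<dots> = (\<Sum>xs\<in>inv_seqs k. if b \<in> {1..Suc k} then (-1) ^ sper (xs@[b]) else 0)"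
    by (rule sum.cong[OF refl], rule sum.delta[OF finite_atLeastAtMost])
  also have "\<dots> = (if b \<in> {1..Suc k} then (\<Sum>xs\<in>inv_seqs k. (-1) ^ sper (xs@[b])) else 0)"
    by (cases "b \<in> {1..Suc k}") (simp_all only: if_True if_False sum.neutral_const)
  also have "(\<Sum>xs\<in>inv_seqs k. (-1) ^ sper (xs@[b]) :: 'a)
      = (\<Sum>xs\<in>inv_seqs k. - ((-1) ^ sper xs * (-1) ^ (b - last xs)))"
  proof (rule sum.cong[OF refl])
    fix xs assume "xs \<in> inv_seqs k"
    hence "xs \<noteq> []" using last_in k by blast
    thus "(-1) ^ sper (xs@[b]) = (- ((-1) ^ sper xs * (-1) ^ (b - last xs)) :: 'a)"
      by (simp add: sper_snoc power_add)
  qed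
  also have "\<dots> = - (\<Sum>a=1..k. S k a * (-1) ^ (b - a))"
  proof -
    have "(\<Sum>a=1..k. (S k a :: 'a) * (-1) ^ (b - a))
       = (\<Sum>a=1..k. \<Sum>xs\<in>inv_seqs k. if last xs = a then (-1) ^ sper xs * (-1) ^ (b - a) else 0)"
      unfolding S_def sum_distrib_right by (intro sum.cong refl) simp
    also have "\<dots> = (\<Sum>xs\<in>inv_seqs k. \<Sum>a=1..k. if last xs = a then (-1) ^ sper xs * (-1) ^ (b - a) else 0)"
      by (rule sum.swap)
    also have "\<dots> = (\<Sum>xs\<in>inv_seqs k. (-1) ^ sper xs * (-1) ^ (b - last xs))"
    proof (rule sum.cong[OF refl])
      fix xs assume "xs \<in> inv_seqs k"
      hence "last xs \<in> {1..k}" using last_in k by blast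
      thus "(\<Sum>a=1..k. if last xs = a then (-1) ^ sper xs * (-1) ^ (b - a) else 0)
          = ((-1) ^ sper xs * (-1) ^ (b - last xs) :: 'a)"
        by (subst sum.delta'[OF finite_atLeastAtMost]) simp
    qed
    finally show ?thesis by (simp add: sum_negf)
  qed
  finally show ?thesis by simp
qed

lemma S_1: "(S (Suc 0) a :: 'a::comm_ring_1) = (if a = 1 then 1 else 0)"
  unfolding S_def inv_seqs_1[simplified] by (simp add: sper_def)

definition C :: "nat \<Rightarrow> nat \<Rightarrow> 'a::comm_ring_1" where
  "C j b = (if b = j + 2 then 2 ^ j else if b = j + 1 then - (2 ^ j) else 0)"

lemma S_closed: "(S (j + 2) b :: 'a::comm_ring_1) = C j b"
proof (induction j arbitrary: b)
  case 0
  have "(S 2 b :: 'a) = (if b \<in> {1..2} then - (\<Sum>a=1..1. S 1 a * (-1) ^ (b - a)) else 0)"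
    using S_rec[of 1 b] by (simp add: numeral_2_eq_2)
  also have "\<dots> = (if b \<in> {1..2} then - ((-1) ^ (b - 1)) else 0)"
    by (simp add: S_1[where 'a='a])
  also have "\<dots> = C 0 b"
    unfolding C_def by (cases "b = 1"; cases "b = 2") auto
  finally show ?case by (simp add: numeral_2_eq_2)
next
  case (Suc j)
  define k where "k = j + 2"
  have "(S (Suc k) b :: 'a) = (if b \<in> {1..Suc k} then - (\<Sum>a=1..k. S k a * (-1) ^ (b - a)) else 0)"
    using S_rec[of k b] k_def by simp
  also have "(\<Sum>a=1..k. (S k a :: 'a) * (-1) ^ (b - a))
      = S k (k - 1) * (-1) ^ (b - (k - 1)) + S k k * (-1) ^ (b - k)"
    by (rule two_terms) (auto simp: k_def Suc.IH[simplified] C_def)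
  also have "\<dots> = - (2 ^ j * (-1) ^ (b - Suc j)) + 2 ^ j * (-1) ^ (b - (j + 2))"
    by (simp add: k_def Suc.IH[simplified] C_def)
  finally have e: "(S (Suc k) b :: 'a) = (if b \<in> {1..Suc k} then
      - (- (2 ^ j * (-1) ^ (b - Suc j)) + 2 ^ j * (-1) ^ (b - (j + 2))) else 0)" .
  have "(if b \<in> {1..Suc k} then
      - (- (2 ^ j * (-1) ^ (b - Suc j)) + 2 ^ j * (-1) ^ (b - (j + 2))) else 0) = (C (Suc j) b :: 'a)"
  proof -
    consider "b \<le> Suc j" | "b = j + 2" | "b = j + 3" | "b > j + 3" by linarith
    thus ?thesis
    proof cases
      case 1
      then show ?thesis unfolding C_def k_def by auto
    next
      case 2
      then show ?thesis unfolding C_def k_def by (simp add: numeral_2_eq_2)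
    next
      case 3
      then show ?thesis unfolding C_def k_def by (simp add: numeral_3_eq_3 numeral_2_eq_2)
    next
      case 4
      then show ?thesis unfolding C_def k_def by auto
    qed
  qed
  with e show ?case by (simp add: k_def)
qed

lemma S_closed': "(S (Suc (Suc j)) b :: 'a::comm_ring_1) = C j b"
  using S_closed[of j b] by simp

lemma part2:
  fixes y :: "'a::comm_ring_1"
  assumes "n \<ge> 3"
  shows "a_gf n y 1 (-1) = 2 ^ (n - 2) * y ^ (n - 1) * (y - 1)"
proof -
  define j where "j = n - 2"
  have j: "n = j + 2" "j \<ge> 1" using assms unfolding j_def by arith+
  have "a_gf n y 1 (-1) = (\<Sum>i=1..n. y ^ i * S n i)"
    unfolding a_gf_def S_def using assms by (simp add: last_sum)
  also have "\<dots> = (\<Sum>i=1..n. y ^ i * C j i)"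
    by (intro sum.cong refl) (simp add: j S_closed'[where 'a='a])
  also have "\<dots> = y ^ (n - 1) * C j (n - 1) + y ^ n * C j n"
    by (rule two_terms) (auto simp: j C_def)
  also have "\<dots> = 2 ^ (n - 2) * y ^ (n - 1) * (y - 1)"
    using j by (simp add: C_def algebra_simps)
  finally show ?thesis .
qed

theorem proposition2p5:
  fixes n :: nat and y :: "'a::comm_ring_1"
  assumes "n \<ge> 3"
  shows "a_gf n y (-1) 1 = 0 \<and> a_gf n y 1 (-1) = 2 ^ (n - 2) * y ^ (n - 1) * (y - 1)"
  using part1[OF assms, of y] part2[OF assms, of y] by simp

end
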